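(* Let $S=s_1,\ldots,s_n$ be a sequence of nonnegative integers, let $\gamma>0$, let $k$ be a positive integer and $\epsilon>0$. Let $(L^*,\alpha^*,\beta^* )$ be an optimal solution of $\textsc{Geo}$ for $S,\gamma,k$, and let $(L,\alpha,\beta)$ be the output of $\textit{ApproxGeo}(S,\gamma,k,\epsilon)$. Then \[ \mathrm{score}_{\mathrm{geo}}(L,S;\alpha,\beta,\gamma)\le(1+\epsilon)\,\mathrm{score}_{\mathrm{geo}}(L^*,S;\alpha^*,\beta^*,\gamma). \]
   Context: A level sequence is $L=\ell_1,\ldots,\ell_n$ of integers with $0\le\ell_i\le k$; set $\ell_0=0$. The penalty is $\mathrm{pen}(x,y)=\max(y-x,0)\,\gamma\log n$. The geometric distribution is $p_{\mathrm{geo}}(s;\lambda)=(1-\lambda)\lambda^s$ (with $0^0=1$). For $0\le\alpha<1$ and $0<\beta<1$ the score is $\mathrm{score}_{\mathrm{geo}}(L,S;\alpha,\beta,\gamma)=\sum_{i=1}^n\big[-\log p_{\mathrm{geo}}(s_i;\beta\alpha^{\ell_i})+\mathrm{pen}(\ell_{i-1},\ell_i)\big]$. Problem $\textsc{Geo}$: given $S,\gamma,k$, find $L$, $\alpha$, $\beta$ minimizing this score. $\textit{Viterbi}(S,\alpha,\beta,\gamma,k,p_{\mathrm{geo}})$ returns a level sequence minimizing the score for fixed $\alpha,\beta$. Algorithm $\textit{GeoAlpha}(S,\alpha,\gamma,k,\epsilon)$: let $\mu=\frac1n\sum_i s_i$; if $\mu=0$ return the all-zero level sequence; otherwise let $\eta=\mu/(\mu+1)$,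 $c=1$; while $\eta^c\le\mu/(\mu+1/n)$: set $\beta=\eta^c$, run $\textit{Viterbi}(S,\alpha,\beta,\gamma,k,p_{\mathrm{geo}})$, set $c\leftarrow c/(1+\epsilon)$; return the best tested solution. Algorithm $\textit{ApproxGeo}(S,\gamma,k,\epsilon)$: run $\textit{GeoAlpha}(S,0,\gamma,k,\epsilon)$; let $\mu=\frac1n\sum_i s_i$, $\eta=1/(1+nk)$, $\sigma=\mu/(\mu+1/n)$, $c=1$; while $\eta^c\le\sigma^{\epsilon/k}$: set $\alpha=\eta^c$, run $\textit{GeoAlpha}(S,\alpha,\gamma,k,\epsilon)$, set $c\leftarrow c/(1+\epsilon)$. Return the triple $(L,\alpha,\beta)$ with the smallest score among all observed solutions. *)

theory Defs
  imports Complex_Main "HOL-Library.Extended_Real"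
begin

text \<open>Index i (0-based) of the list corresponds to position i+1 of the paper; the
  predecessor level of position i is (0 # L) ! i, so that l_0 = 0.\<close>

definition valid_levels :: "nat \<Rightarrow> nat \<Rightarrow> nat list \<Rightarrow> bool" where
  "valid_levels k n L \<longleftrightarrow> length L = n \<and> (\<forall>x\<in>set L. x \<le> k)"

text \<open>Geometric distribution; real power with natural exponent, so 0^0 = 1.\<close>
definition p_geo :: "nat \<Rightarrow> real \<Rightarrow> real" where
  "p_geo s lam = (1 - lam) * lam ^ s"

definition neglog :: "real \<Rightarrow> ereal" where
  "neglog p = (if p > 0 then ereal (- ln p) else \<infinity>)"

definition pen :: "real \<Rightarrow> nat \<Rightarrow> nat \<Rightarrow> nat \<Rightarrow> real" where
  "pen \<gamma> n x y = max (real y - real x) 0 * \<gamma> * ln (real n)"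

definition score_geo :: "nat list \<Rightarrow> nat list \<Rightarrow> real \<Rightarrow> real \<Rightarrow> real \<Rightarrow> ereal" where
  "score_geo L S \<alpha> \<beta> \<gamma> =
     (\<Sum>i<length S. neglog (p_geo (S ! i) (\<beta> * \<alpha> ^ (L ! i)))
                    + ereal (pen \<gamma> (length S) ((0 # L) ! i) (L ! i)))"

definition geo_feasible :: "nat list \<Rightarrow> nat \<Rightarrow> nat list \<Rightarrow> real \<Rightarrow> real \<Rightarrow> bool" where
  "geo_feasible S k L \<alpha> \<beta> \<longleftrightarrow>
     valid_levels k (length S) L \<and> 0 \<le> \<alpha> \<and> \<alpha> < 1 \<and> 0 < \<beta> \<and> \<beta> < 1"

definition geo_optimal :: "nat list \<Rightarrow> real \<Rightarrow> nat \<Rightarrow> nat list \<Rightarrow> real \<Rightarrow> real \<Rightarrow> bool" where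
  "geo_optimal S \<gamma> k L \<alpha> \<beta> \<longleftrightarrow> geo_feasible S k L \<alpha> \<beta> \<and>
     (\<forall>L' \<alpha>' \<beta>'. geo_feasible S k L' \<alpha>' \<beta>' \<longrightarrow>
        score_geo L S \<alpha> \<beta> \<gamma> \<le> score_geo L' S \<alpha>' \<beta>' \<gamma>)"

text \<open>Possible outputs of Viterbi(S, alpha, beta, gamma, k, p_geo):
  any level sequence minimizing the score for fixed alpha, beta.\<close>
definition viterbi_out :: "nat list \<Rightarrow> real \<Rightarrow> real \<Rightarrow> real \<Rightarrow> nat \<Rightarrow> nat list \<Rightarrow> bool" where
  "viterbi_out S \<alpha> \<beta> \<gamma> k L \<longleftrightarrow> valid_levels k (length S) L \<and>
     (\<forall>L'. valid_levels k (length S) L' \<longrightarrow> score_geo L S \<alpha> \<beta> \<gamma> \<le> score_geo L' S \<alpha> \<beta> \<gamma>)"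

definition mean :: "nat list \<Rightarrow> real" where
  "mean S = (\<Sum>i<length S. real (S ! i)) / real (length S)"

text \<open>Value of c after j iterations of c := c/(1+eps), starting from c = 1.\<close>
definition cval :: "real \<Rightarrow> nat \<Rightarrow> real" where
  "cval \<epsilon> j = 1 / (1 + \<epsilon>) ^ j"

text \<open>Values beta tested by GeoAlpha (case mu > 0): the while loop runs iterations
  j = 0, 1, ... as long as the guard held in all iterations so far.\<close>
definition geo_alpha_betas :: "nat list \<Rightarrow> real \<Rightarrow> real set" where
  "geo_alpha_betas S \<epsilon> =
     (let \<mu> = mean S; \<eta> = \<mu> / (\<mu> + 1); n = real (length S) in
      {\<eta> powr cval \<epsilon> j | j. \<forall>i\<le>j. \<eta> powr cval \<epsilon> i \<le> \<mu> / (\<mu> + 1 / n)})"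

text \<open>Solutions (L, alpha, beta) observed during GeoAlpha(S, alpha, gamma, k, eps).
  If mu = 0 the algorithm returns the all-zero level sequence; its beta is not
  specified by the paper, so any beta in (0,1) is allowed.\<close>
definition geo_alpha_obs :: "nat list \<Rightarrow> real \<Rightarrow> real \<Rightarrow> nat \<Rightarrow> real \<Rightarrow> (nat list \<times> real \<times> real) set" where
  "geo_alpha_obs S \<alpha> \<gamma> k \<epsilon> =
     (if mean S = 0 then {(replicate (length S) 0, \<alpha>, b) | b. 0 < b \<and> b < 1}
      else {(L, \<alpha>, \<beta>) | L \<beta>. \<beta> \<in> geo_alpha_betas S \<epsilon> \<and> viterbi_out S \<alpha> \<beta> \<gamma> k L})"

text \<open>Values alpha tested in the loop of ApproxGeo.\<close>
definition approx_alphas :: "nat list \<Rightarrow> nat \<Rightarrow> real \<Rightarrow> real set" where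
  "approx_alphas S k \<epsilon> =
     (let \<mu> = mean S; n = real (length S); \<eta> = 1 / (1 + n * real k);
          \<sigma> = \<mu> / (\<mu> + 1 / n) in
      {\<eta> powr cval \<epsilon> j | j. \<forall>i\<le>j. \<eta> powr cval \<epsilon> i \<le> \<sigma> powr (\<epsilon> / real k)})"

definition approx_geo_obs :: "nat list \<Rightarrow> real \<Rightarrow> nat \<Rightarrow> real \<Rightarrow> (nat list \<times> real \<times> real) set" where
  "approx_geo_obs S \<gamma> k \<epsilon> =
     geo_alpha_obs S 0 \<gamma> k \<epsilon> \<union> (\<Union>\<alpha>\<in>approx_alphas S k \<epsilon>. geo_alpha_obs S \<alpha> \<gamma> k \<epsilon>)"

definition approx_geo_output :: "nat list \<Rightarrow> real \<Rightarrow> nat \<Rightarrow> real \<Rightarrow> nat list \<Rightarrow> real \<Rightarrow> real \<Rightarrow> bool" where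
  "approx_geo_output S \<gamma> k \<epsilon> L \<alpha> \<beta> \<longleftrightarrow> (L, \<alpha>, \<beta>) \<in> approx_geo_obs S \<gamma> k \<epsilon> \<and>
     (\<forall>(L', \<alpha>', \<beta>') \<in> approx_geo_obs S \<gamma> k \<epsilon>. score_geo L S \<alpha> \<beta> \<gamma> \<le> score_geo L' S \<alpha>' \<beta>' \<gamma>)"

end

theory Submission
  imports Defs
begin


definition cst :: "nat \<Rightarrow> real \<Rightarrow> real \<Rightarrow> real" where
  "cst s b a = - ln (1 - b*a) - real s * ln b - real s * ln a"

definition cnd :: "nat list \<Rightarrow> nat list \<Rightarrow> real \<Rightarrow> bool" where
  "cnd S L \<alpha> \<longleftrightarrow> (\<forall>i<length S. \<alpha>^(L!i) = 0 \<longrightarrow> S!i = 0)"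

lemma neglog_pos: "p > 0 \<Longrightarrow> neglog p = ereal (- ln p)"
  by (simp add: neglog_def)

lemma neglog_nonneg: "p \<le> 1 \<Longrightarrow> 0 \<le> neglog p"
  by (auto simp: neglog_def)

lemma p_geo_le1: "0 \<le> l \<Longrightarrow> l \<le> 1 \<Longrightarrow> p_geo s l \<le> 1"
  unfolding p_geo_def by (intro mult_le_one) (auto simp: power_le_one)

lemma pen_nonneg: "\<gamma> > 0 \<Longrightarrow> n \<ge> 1 \<Longrightarrow> 0 \<le> pen \<gamma> n x y"
  unfolding pen_def by simp

lemma neglog_pgeo:
  assumes "0 < b" "b < 1" "0 \<le> a" "a \<le> 1" "a = 0 \<longrightarrow> s = 0"
  shows "neglog (p_geo s (b*a)) = ereal (cst s b a)"
proof (cases "a = 0")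
  case True
  then show ?thesis using assms by (simp add: p_geo_def cst_def neglog_def)
next
  case False
  hence a: "a > 0" using assms by simp
  have l1: "0 < b*a" using a assms by simp
  have "b*a \<le> b" using assms a by (simp add: mult_left_le)
  hence l: "0 < b*a" "b*a < 1" using l1 assms by linarith+
  have pp: "p_geo s (b*a) > 0" using l by (simp add: p_geo_def)
  have "ln (p_geo s (b*a)) = ln (1 - b*a) + real s * (ln b + ln a)"
    unfolding p_geo_def using l a assms by (simp add: ln_mult ln_realpow)
  then show ?thesis using pp by (simp add: neglog_def cst_def algebra_simps)
qed

lemma score_real:
  assumes "0 < \<beta>" "\<beta> < 1" "0 \<le> \<alpha>" "\<alpha> \<le> 1" "cnd S L \<alpha>"
  shows "score_geo L S \<alpha> \<beta> \<gamma> = ereal (\<Sum>i<length S. cst (S!i) \<beta> (\<alpha>^(L!i)) + pen \<gamma> (length S) ((0#L)!i) (L!i))"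
proof -
  have *: "neglog (p_geo (S ! i) (\<beta> * \<alpha> ^ (L ! i))) = ereal (cst (S!i) \<beta> (\<alpha>^(L!i)))"
    if i: "i < length S" for i
  proof (rule neglog_pgeo)
    show "0 \<le> \<alpha>^(L!i)" "\<alpha>^(L!i) \<le> 1" using assms(3,4) by (simp_all add: power_le_one)
    show "\<alpha>^(L!i) = 0 \<longrightarrow> S!i = 0" using assms(5) i unfolding cnd_def by blast
  qed (use assms in auto)
  have "score_geo L S \<alpha> \<beta> \<gamma> = (\<Sum>i<length S. ereal (cst (S!i) \<beta> (\<alpha>^(L!i)) + pen \<gamma> (length S) ((0#L)!i) (L!i)))"
    unfolding score_geo_def by (rule sum.cong) (simp_all add: *)
  also have "\<dots> = ereal (\<Sum>i<length S. cst (S!i) \<beta> (\<alpha>^(L!i)) + pen \<gamma> (length S) ((0#L)!i) (L!i))"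
    by (rule sum_ereal)
  finally show ?thesis .
qed

lemma fin_cnd:
  assumes "score_geo L S \<alpha> \<beta> \<gamma> \<noteq> \<infinity>" "0 \<le> \<alpha>"
  shows "cnd S L \<alpha>"
  unfolding cnd_def
proof (intro allI impI)
  fix i assume i: "i < length S" and z: "\<alpha>^(L!i) = 0"
  show "S!i = 0"
  proof (rule ccontr)
    assume "S!i \<noteq> 0"
    hence "p_geo (S!i) (\<beta> * \<alpha>^(L!i)) = 0" using z by (simp add: p_geo_def)
    hence "neglog (p_geo (S!i) (\<beta> * \<alpha>^(L!i))) + ereal (pen \<gamma> (length S) ((0 # L) ! i) (L ! i)) = \<infinity>"
      by (simp add: neglog_def)
    hence "score_geo L S \<alpha> \<beta> \<gamma> = \<infinity>" unfolding score_geo_def using i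
      by (subst sum_Pinfty) auto
    then show False using assms by simp
  qed
qed



lemma ln_diff_le: "0 < (u::real) \<Longrightarrow> 0 < v \<Longrightarrow> ln u - ln v \<le> u / v - 1"
  using ln_le_minus_one[of "u/v"] by (simp add: ln_div)

lemma pow_diff:
  fixes \<alpha> \<eta> :: real
  assumes "0 \<le> \<alpha>" "\<alpha> \<le> \<eta>" "\<alpha> + \<eta> \<le> 1"
  shows "\<eta>^(Suc l) - \<alpha>^(Suc l) \<le> \<eta> - \<alpha>"
proof (induction l)
  case 0 then show ?case by simp
next
  case (Suc l)
  have e: "\<eta>^(Suc (Suc l)) - \<alpha>^(Suc (Suc l)) = \<eta> * (\<eta>^(Suc l) - \<alpha>^(Suc l)) + \<alpha>^(Suc l) * (\<eta> - \<alpha>)"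
    by (simp add: algebra_simps)
  have a1: "\<alpha>^(Suc l) \<le> \<alpha>" using assms by (simp add: mult_left_le power_le_one)
  have "\<eta> * (\<eta>^(Suc l) - \<alpha>^(Suc l)) \<le> \<eta> * (\<eta> - \<alpha>)"
    using Suc assms by (intro mult_left_mono) auto
  moreover have "\<alpha>^(Suc l) * (\<eta> - \<alpha>) \<le> \<alpha> * (\<eta> - \<alpha>)"
    using a1 assms by (intro mult_right_mono) auto
  ultimately have "\<eta>^(Suc (Suc l)) - \<alpha>^(Suc (Suc l)) \<le> (\<eta> + \<alpha>) * (\<eta> - \<alpha>)"
    unfolding e by (simp add: algebra_simps)
  also have "\<dots> \<le> \<eta> - \<alpha>" using assms by (simp add: mult_left_le_one_le)
  finally show ?case .
qed

lemma eta_min: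
  fixes n m t :: real
  assumes "n > 0" "m > 0" "0 < t" "t < 1"
  shows "n * (- ln (1 - m/(m+n))) - m * ln (m/(m+n)) \<le> n * (- ln (1 - t)) - m * ln t"
proof -
  define \<eta> where "\<eta> = m/(m+n)"
  have e0: "0 < \<eta>" "\<eta> < 1" using assms by (auto simp: \<eta>_def)
  have e1: "1 - \<eta> = n/(m+n)" using assms by (simp add: \<eta>_def field_simps)
  have "ln (1-t) - ln (1-\<eta>) \<le> (1-t)/(1-\<eta>) - 1" using assms e0 by (intro ln_diff_le) auto
  hence A: "n * (ln (1-t) - ln (1-\<eta>)) \<le> n * ((1-t)/(1-\<eta>) - 1)" using assms by (simp add: mult_left_mono)
  have "ln t - ln \<eta> \<le> t/\<eta> - 1" using assms e0 by (intro ln_diff_le) auto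
  hence B: "m * (ln t - ln \<eta>) \<le> m * (t/\<eta> - 1)" using assms by (simp add: mult_left_mono)
  have C: "n * ((1-t)/(1-\<eta>) - 1) + m * (t/\<eta> - 1) = 0"
    unfolding e1 using assms by (simp add: \<eta>_def field_simps)
  show ?thesis using A B C unfolding \<eta>_def[symmetric] by (simp add: algebra_simps)
qed



lemma beta_up:
  fixes s :: "nat \<Rightarrow> nat" and a :: "nat \<Rightarrow> real" and x y :: real
  assumes a: "\<And>i. i < n \<Longrightarrow> 0 \<le> a i \<and> a i \<le> 1" and iz: "iz < n" "a iz = 1"
    and xy: "0 < x" "x < y" "y < 1" and m: "(\<Sum>i<n. real (s i)) * (1 - x) \<le> x"
  shows "(\<Sum>i<n. cst (s i) x (a i)) \<le> (\<Sum>i<n. cst (s i) y (a i))"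
proof -
  define m where "m = (\<Sum>i<n. real (s i))"
  define G where "G i = ln (1 - y * a i) - ln (1 - x * a i)" for i
  have d: "cst (s i) x (a i) - cst (s i) y (a i) = G i + real (s i) * (ln y - ln x)" for i
    by (simp add: cst_def G_def algebra_simps)
  have pos: "0 < 1 - y * a i" "0 < 1 - x * a i" if "i < n" for i
  proof -
    have "y * a i \<le> y" "x * a i \<le> x" using a[OF that] xy by (simp_all add: mult_left_le)
    thus "0 < 1 - y * a i" "0 < 1 - x * a i" using xy by linarith+
  qed
  have Gle: "G i \<le> 0" if "i < n" for i
  proof -
    have "x * a i \<le> y * a i" using a[OF that] xy by (intro mult_right_mono) auto
    thus ?thesis unfolding G_def using pos[OF that] by simp
  qed
  have G0: "G iz \<le> (1 - y)/(1 - x) - 1" unfolding G_def using iz xy ln_diff_le[of "1-y" "1-x"] by simp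
  have "(\<Sum>i<n. G i) = G iz + (\<Sum>i\<in>{..<n}-{iz}. G i)" using iz by (simp add: sum.remove)
  also have "\<dots> \<le> G iz"
  proof -
    have "sum G ({..<n}-{iz}) \<le> 0" by (rule sum_nonpos) (use Gle in auto)
    thus ?thesis by simp
  qed
  finally have SG: "(\<Sum>i<n. G i) \<le> (1 - y)/(1 - x) - 1" using G0 by linarith
  have m0: "m \<ge> 0" unfolding m_def by (simp add: sum_nonneg)
  have L: "ln y - ln x \<le> y / x - 1" using xy by (intro ln_diff_le) auto
  have SM: "(\<Sum>i<n. real (s i) * (ln y - ln x)) = m * (ln y - ln x)"
    unfolding m_def by (simp add: sum_distrib_right)
  have "m * (ln y - ln x) \<le> m * (y/x - 1)" using L m0 by (simp add: mult_left_mono)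
  moreover have "(1 - y)/(1 - x) - 1 + m * (y/x - 1) \<le> 0"
  proof -
    have e: "(1 - y)/(1 - x) - 1 + m * (y/x - 1) = (y - x) * (m * (1 - x) - x) / (x * (1 - x))"
      using xy by (simp add: field_simps)
    have "(y - x) * (m * (1 - x) - x) \<le> 0" using xy m unfolding m_def[symmetric]
      by (intro mult_nonneg_nonpos) auto
    thus ?thesis unfolding e using xy by (simp add: divide_nonpos_pos)
  qed
  ultimately have "(\<Sum>i<n. cst (s i) x (a i) - cst (s i) y (a i)) \<le> 0"
    unfolding d sum.distrib SM using SG by linarith
  thus ?thesis by (simp add: sum_subtractf)
qed

lemma beta_down:
  fixes s :: "nat \<Rightarrow> nat" and a :: "nat \<Rightarrow> real" and x y :: real
  assumes a: "\<And>i. i < n \<Longrightarrow> 0 \<le> a i \<and> a i \<le> 1"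
    and xy: "0 < x" "x < y" "y < 1" and m: "real n * y \<le> (\<Sum>i<n. real (s i)) * (1 - y)"
  shows "(\<Sum>i<n. cst (s i) y (a i)) \<le> (\<Sum>i<n. cst (s i) x (a i))"
proof -
  define m where "m = (\<Sum>i<n. real (s i))"
  define G where "G i = ln (1 - x * a i) - ln (1 - y * a i)" for i
  have d: "cst (s i) y (a i) - cst (s i) x (a i) = G i + real (s i) * (ln x - ln y)" for i
    by (simp add: cst_def G_def algebra_simps)
  have Gle: "G i \<le> (y - x) / (1 - y)" if "i < n" for i
  proof -
    have "y * a i \<le> y" "x * a i \<le> x" using a[OF that] xy by (simp_all add: mult_left_le)
    hence p: "0 < 1 - y * a i" "0 < 1 - x * a i" "1 - y \<le> 1 - y * a i" using xy by linarith+
    have "G i \<le> (1 - x * a i) / (1 - y * a i) - 1" unfolding G_def using p by (intro ln_diff_le) auto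
    also have "\<dots> = ((y - x) * a i) / (1 - y * a i)" using p by (simp add: field_simps)
    also have "\<dots> \<le> (y - x) / (1 - y)"
      using a[OF that] xy p by (intro frac_le) (auto simp: mult_left_le)
    finally show ?thesis .
  qed
  have SG: "(\<Sum>i<n. G i) \<le> real n * ((y - x) / (1 - y))"
    using sum_mono[of "{..<n}" G "\<lambda>_. (y - x) / (1 - y)"] Gle by simp
  have m0: "m \<ge> 0" unfolding m_def by (simp add: sum_nonneg)
  have L: "ln x - ln y \<le> x / y - 1" using xy by (intro ln_diff_le) auto
  have SM: "(\<Sum>i<n. real (s i) * (ln x - ln y)) = m * (ln x - ln y)"
    unfolding m_def by (simp add: sum_distrib_right)
  have "m * (ln x - ln y) \<le> m * (x/y - 1)" using L m0 by (simp add: mult_left_mono)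
  moreover have "real n * ((y - x) / (1 - y)) + m * (x/y - 1) \<le> 0"
  proof -
    have e: "real n * ((y - x) / (1 - y)) + m * (x/y - 1) = (y - x) * (real n * y - m * (1 - y)) / (y * (1 - y))"
      using xy by (simp add: field_simps)
    have "(y - x) * (real n * y - m * (1 - y)) \<le> 0" using xy m unfolding m_def[symmetric]
      by (intro mult_nonneg_nonpos) auto
    thus ?thesis unfolding e using xy by (simp add: divide_nonpos_pos)
  qed
  ultimately have "(\<Sum>i<n. cst (s i) y (a i) - cst (s i) x (a i)) \<le> 0"
    unfolding d sum.distrib SM using SG by linarith
  thus ?thesis by (simp add: sum_subtractf)
qed



lemma raise_alpha:
  fixes s :: "nat \<Rightarrow> nat" and l :: "nat \<Rightarrow> nat" and \<alpha> \<beta> :: real and k n :: nat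
  assumes n: "n \<ge> 1" and k: "k \<ge> 1" and al: "0 < \<alpha>" "\<alpha> < 1 / (1 + real n * real k)"
    and b: "0 < \<beta>" "\<beta> < 1" and j: "j < n" "s j > 0" "l j > 0"
  shows "(\<Sum>i<n. cst (s i) \<beta> ((1 / (1 + real n * real k))^(l i))) \<le> (\<Sum>i<n. cst (s i) \<beta> (\<alpha>^(l i)))"
proof -
  define \<eta> where "\<eta> = 1 / (1 + real n * real k)"
  have nk1: "(1::real) \<le> real n" "(1::real) \<le> real k" using n k by simp_all
  have N: "real n * real k \<ge> 1" using mult_mono[OF nk1] by simp
  have e0: "0 < \<eta>" "\<eta> \<le> 1/2" using N unfolding \<eta>_def by (auto simp: field_simps)
  have ae: "\<alpha> < \<eta>" using al unfolding \<eta>_def by simp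
  define D where "D = ln \<eta> - ln \<alpha>"
  define E where "E = (\<eta> - \<alpha>) / (1 - \<eta>)"
  define A where "A i = ln (1 - \<beta> * \<alpha>^(l i)) - ln (1 - \<beta> * \<eta>^(l i))" for i
  define B where "B i = real (s i) * real (l i) * D" for i
  have d: "cst (s i) \<beta> (\<eta>^(l i)) - cst (s i) \<beta> (\<alpha>^(l i)) = A i - B i" for i
    using e0 al by (simp add: cst_def A_def B_def D_def ln_realpow algebra_simps)
  have D0: "D > 0" unfolding D_def using al ae by simp
  have AE: "A i \<le> E" for i
  proof (cases "l i")
    case 0
    then show ?thesis using e0 ae by (simp add: A_def E_def)
  next
    case (Suc q)
    have v1: "\<eta>^(l i) \<le> \<eta>" using Suc e0 by (simp add: mult_left_le power_le_one)
    have uv: "\<alpha>^(l i) \<le> \<eta>^(l i)" using al ae by (intro power_mono) auto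
    have u0: "0 < \<alpha>^(l i)" using al by simp
    have bv: "\<beta> * \<eta>^(l i) \<le> \<eta>^(l i)" "\<beta> * \<alpha>^(l i) \<le> \<alpha>^(l i)" using b e0 al
      by (simp_all add: mult_left_le_one_le)
    have p: "0 < 1 - \<beta> * \<eta>^(l i)" "0 < 1 - \<beta> * \<alpha>^(l i)" "1 - \<eta> \<le> 1 - \<beta> * \<eta>^(l i)"
      using bv v1 e0 uv by linarith+
    have "A i \<le> (1 - \<beta> * \<alpha>^(l i)) / (1 - \<beta> * \<eta>^(l i)) - 1" unfolding A_def using p by (intro ln_diff_le) auto
    also have "\<dots> = (\<beta> * (\<eta>^(l i) - \<alpha>^(l i))) / (1 - \<beta> * \<eta>^(l i))" using p by (simp add: field_simps)
    also have "\<dots> \<le> (\<eta>^(l i) - \<alpha>^(l i)) / (1 - \<eta>)"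
      using b uv p e0 by (intro frac_le) (auto simp: mult_left_le_one_le)
    also have "\<dots> \<le> E" unfolding E_def Suc using pow_diff[of \<alpha> \<eta> q] al ae e0 p
      by (intro divide_right_mono) auto
    finally show ?thesis .
  qed
  have SA: "(\<Sum>i<n. A i) \<le> real n * E" using sum_mono[of "{..<n}" A "\<lambda>_. E"] AE by simp
  have B0: "B i \<ge> 0" for i using D0 by (simp add: B_def)
  have "B j \<ge> D"
  proof -
    have "(1::real) \<le> real (s j)" "(1::real) \<le> real (l j)" using j by simp_all
    hence "real (s j) * real (l j) \<ge> 1" using mult_mono[of 1 "real (s j)" 1 "real (l j)"] by simp
    thus ?thesis unfolding B_def using D0 by (simp add: mult_le_cancel_right1)
  qed
  have SB: "(\<Sum>i<n. B i) \<ge> D"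
  proof -
    have "B j \<le> (\<Sum>i<n. B i)" using j B0 by (intro member_le_sum) auto
    thus ?thesis using \<open>B j \<ge> D\<close> by linarith
  qed
  have nE: "real n * E \<le> D"
  proof -
    define t where "t = \<alpha> * (1 + real n * real k)"
    have t0: "0 < t" unfolding t_def using al N by (intro mult_pos_pos) auto
    have "t < 1" using al N unfolding t_def by (simp add: field_simps)
    note t = t0 this
    define M where "M = real n * real k"
    have M: "M \<ge> 1" using N unfolding M_def .
    have h1: "1 - \<eta> = M / (1 + M)" unfolding \<eta>_def M_def[symmetric] using M by (simp add: field_simps)
    have h2: "\<eta> - \<alpha> = (1 - t) / (1 + M)" unfolding \<eta>_def t_def M_def[symmetric] using M by (simp add: field_simps)
    have Mp: "M > 0" "1 + M > 0" using M by simp_all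
    have "E = ((1 - t) / (1 + M)) / (M / (1 + M))" unfolding E_def h1 h2 ..
    also have "\<dots> = (1 - t) / M" using Mp by (simp add: divide_divide_times_eq)
    finally have "E = (1 - t) / M" .
    hence "real n * E = (1 - t) / real k" unfolding M_def using nk1 by (simp add: field_simps)
    also have "\<dots> \<le> (1 - t) / 1" using t nk1 by (intro divide_left_mono) auto
    also have "\<dots> = 1 - t" by simp
    also have "\<dots> \<le> D"
    proof -
      have "\<alpha> / \<eta> = t" unfolding t_def \<eta>_def by simp
      hence "ln t = ln \<alpha> - ln \<eta>" using al e0 ln_div[of \<alpha> \<eta>] by simp
      thus ?thesis using ln_le_minus_one[of t] t unfolding D_def by linarith
    qed
    finally show ?thesis .
  qed
  have "(\<Sum>i<n. cst (s i) \<beta> (\<eta>^(l i)) - cst (s i) \<beta> (\<alpha>^(l i))) \<le> 0"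
    unfolding d sum_subtractf using SA SB nE by linarith
  thus ?thesis unfolding \<eta>_def[symmetric] by (simp add: sum_subtractf)
qed



lemma final_term:
  fixes s l :: nat and tb b ta a \<epsilon> p :: real
  assumes b: "0 < tb" "tb \<le> b" "b < 1" "- ln tb \<le> (1+\<epsilon>) * (- ln b)"
    and a: "0 \<le> ta" "ta \<le> a" "a < 1" "a = 0 \<Longrightarrow> ta = 0"
      "a > 0 \<Longrightarrow> ta > 0 \<and> - ln ta \<le> (1+\<epsilon>) * (- ln a)"
    and e: "\<epsilon> > 0" and p: "p \<ge> 0"
  shows "cst s tb (ta^l) + p \<le> (1+\<epsilon>) * (cst s b (a^l) + p)"
proof -
  define X where "X = - ln (1 - b * a^l)"
  define Y where "Y = - real s * ln b"
  define Z where "Z = - real s * ln (a^l)"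
  have ba: "b * a^l \<le> b" using b a by (simp add: mult_left_le power_le_one)
  have pos: "0 < 1 - b * a^l" using ba b by linarith
  have le1: "tb * ta^l \<le> b * a^l" using a b by (intro mult_mono power_mono) auto
  have "0 \<le> tb * ta^l" using a b by simp
  hence pos2: "0 < 1 - tb * ta^l" using le1 pos by linarith
  have P1: "- ln (1 - tb * ta^l) \<le> X" unfolding X_def using le1 pos pos2 by simp
  have "0 \<le> b * a^l" using a b by simp
  hence X0: "X \<ge> 0" unfolding X_def using pos by simp
  have P2: "- real s * ln tb \<le> (1+\<epsilon>) * Y" unfolding Y_def using b
    by (metis mult.left_commute mult_left_mono mult_minus_left of_nat_0_le_iff mult_minus_right)
  have P3: "- real s * ln (ta^l) \<le> (1+\<epsilon>) * Z"
  proof (cases "a = 0")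
    case True
    then show ?thesis using a by (cases l) (simp_all add: Z_def)
  next
    case False
    hence ap: "a > 0" "ta > 0" "- ln ta \<le> (1+\<epsilon>) * (- ln a)" using a by auto
    have "real s * real l * (- ln ta) \<le> real s * real l * ((1+\<epsilon>) * (- ln a))"
      using ap by (intro mult_left_mono) auto
    thus ?thesis unfolding Z_def using ap by (simp add: ln_realpow algebra_simps)
  qed
  have "cst s tb (ta^l) + p = - ln (1 - tb * ta^l) + (- real s * ln tb) + (- real s * ln (ta^l)) + p"
    by (simp add: cst_def)
  also have "\<dots> \<le> X + (1+\<epsilon>) * Y + (1+\<epsilon>) * Z + p" using P1 P2 P3 by linarith
  also have "\<dots> \<le> (1+\<epsilon>) * X + (1+\<epsilon>) * Y + (1+\<epsilon>) * Z + (1+\<epsilon>) * p"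
    using X0 p e by (simp add: algebra_simps)
  also have "\<dots> = (1+\<epsilon>) * (cst s b (a^l) + p)" by (simp add: cst_def X_def Y_def Z_def algebra_simps)
  finally show ?thesis .
qed

lemma grid:
  fixes \<eta> x U \<epsilon> :: real
  assumes "0 < \<eta>" "\<eta> \<le> x" "x \<le> U" "U < 1" "\<epsilon> > 0"
  shows "\<exists>j. (\<forall>i\<le>j. \<eta> powr cval \<epsilon> i \<le> U) \<and> 0 < \<eta> powr cval \<epsilon> j \<and> \<eta> powr cval \<epsilon> j \<le> x
            \<and> - ln (\<eta> powr cval \<epsilon> j) \<le> (1+\<epsilon>) * (- ln x)"
proof -
  have x: "0 < x" "x < 1" using assms by linarith+
  have le: "ln \<eta> < 0" "ln x < 0" "ln \<eta> \<le> ln x" using assms x by auto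
  define c where "c = ln x / ln \<eta>"
  have c: "0 < c" "c \<le> 1" using le unfolding c_def by (auto simp: divide_simps)
  have cx: "c * ln \<eta> = ln x" unfolding c_def using le by simp
  have cv: "cval \<epsilon> j = (1 / (1+\<epsilon>))^j" for j by (simp add: cval_def power_one_over)
  obtain j0 where "(1 / (1+\<epsilon>))^j0 < c" using real_arch_pow_inv[of c "1/(1+\<epsilon>)"] c assms by auto
  hence P: "cval \<epsilon> j0 < c" by (simp add: cv)
  define J where "J = (LEAST j. cval \<epsilon> j < c)"
  have PJ: "cval \<epsilon> J < c" unfolding J_def by (rule LeastI[of _ j0]) (rule P)
  have J0: "J \<noteq> 0"
  proof
    assume "J = 0"
    hence "cval \<epsilon> 0 < c" using PJ by simp
    thus False using c by (simp add: cval_def)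
  qed
  then obtain j where Jj: "J = Suc j" by (cases J) auto
  have nP: "\<not> cval \<epsilon> j < c" unfolding J_def
  proof
    assume "cval \<epsilon> j < c"
    hence "(LEAST j. cval \<epsilon> j < c) \<le> j" by (rule Least_le)
    thus False using Jj unfolding J_def by simp
  qed
  have mono: "cval \<epsilon> j \<le> cval \<epsilon> i" if "i \<le> j" for i
    unfolding cval_def using assms that by (intro divide_left_mono power_increasing) auto
  have cvpos: "cval \<epsilon> i > 0" for i unfolding cval_def using assms by simp
  have pw: "\<eta> powr y \<le> x" if "y \<ge> c" for y
  proof -
    have "\<eta> powr y \<le> \<eta> powr c" using that assms x by (intro powr_mono') auto
    also have "\<eta> powr c = x" using cx assms x by (simp add: powr_def)
    finally show ?thesis .
  qed
  have A: "\<forall>i\<le>j. \<eta> powr cval \<epsilon> i \<le> U"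
  proof (intro allI impI)
    fix i assume "i \<le> j"
    hence "cval \<epsilon> i \<ge> c" using mono nP by (meson not_less order_trans)
    thus "\<eta> powr cval \<epsilon> i \<le> U" using pw assms by (meson order_trans)
  qed
  have B: "\<eta> powr cval \<epsilon> j \<le> x" using nP pw by simp
  have cs: "cval \<epsilon> j = (1+\<epsilon>) * cval \<epsilon> J" unfolding Jj cval_def using assms by simp
  have "- ln (\<eta> powr cval \<epsilon> j) = (1+\<epsilon>) * cval \<epsilon> J * (- ln \<eta>)" using assms cs by simp
  also have "\<dots> \<le> (1+\<epsilon>) * c * (- ln \<eta>)" using PJ le assms
    by (intro mult_right_mono mult_left_mono) auto
  also have "\<dots> = (1+\<epsilon>) * (- ln x)" using cx by (simp add: algebra_simps)
  finally show ?thesis using A B assms by (intro exI[of _ j]) auto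
qed

lemma viterbi_ex: "\<exists>L. viterbi_out S \<alpha> \<beta> \<gamma> k L"
proof -
  define A where "A = {L. valid_levels k (length S) L}"
  have "A \<subseteq> {xs. set xs \<subseteq> {0..k} \<and> length xs = length S}" unfolding A_def valid_levels_def by auto
  hence fin: "finite A" using finite_lists_length_eq[of "{0..k}" "length S"] by (auto intro: finite_subset)
  have ne: "replicate (length S) 0 \<in> A" unfolding A_def valid_levels_def by auto
  define f where "f L = score_geo L S \<alpha> \<beta> \<gamma>" for L
  have "Min (f ` A) \<in> f ` A" using fin ne by (intro Min_in) auto
  then obtain L where L: "L \<in> A" "f L = Min (f ` A)" by auto
  have "\<forall>L'\<in>A. f L \<le> f L'" using L fin by auto
  thus ?thesis using L unfolding viterbi_out_def A_def f_def by auto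
qed



lemma pen_mono:
  assumes "\<gamma> > 0" "n \<ge> 1" "real y' - real x' \<le> real y - real x"
  shows "pen \<gamma> n x' y' \<le> pen \<gamma> n x y"
proof -
  have l: "0 \<le> ln (real n)" using assms by simp
  have "max (real y' - real x') 0 \<le> max (real y - real x) 0" using assms by simp
  hence A: "max (real y' - real x') 0 * \<gamma> \<le> max (real y - real x) 0 * \<gamma>" using assms by (intro mult_right_mono) auto
  show "pen \<gamma> n x' y' \<le> pen \<gamma> n x y" unfolding pen_def by (rule mult_right_mono[OF A l])
qed

lemma shift_score:
  fixes L :: "nat list" and \<alpha> \<beta> :: real
  assumes g: "\<gamma> > 0" and len: "length L = length S" and m0: "\<forall>x\<in>set L. m0 \<le> x"
  shows "score_geo (map (\<lambda>x. x - m0) L) S \<alpha> (\<beta> * \<alpha>^m0) \<gamma> \<le> score_geo L S \<alpha> \<beta> \<gamma>"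
  unfolding score_geo_def
proof (rule sum_mono)
  fix i assume "i \<in> {..<length S}"
  hence i: "i < length S" by simp
  define L' where "L' = map (\<lambda>x. x - m0) L"
  have mi: "m0 \<le> L!i" using m0 i len by auto
  have lam: "\<beta> * \<alpha>^m0 * \<alpha>^(L'!i) = \<beta> * \<alpha>^(L!i)"
    unfolding L'_def using i len mi by (simp add: power_add[symmetric] mult.assoc)
  have pn: "pen \<gamma> (length S) ((0 # L') ! i) (L' ! i) \<le> pen \<gamma> (length S) ((0 # L) ! i) (L ! i)"
  proof (rule pen_mono)
    show "\<gamma> > 0" "length S \<ge> 1" using g i by auto
    show "real (L' ! i) - real ((0 # L') ! i) \<le> real (L ! i) - real ((0 # L) ! i)"
    proof (cases i)
      case 0 then show ?thesis unfolding L'_def using i len mi by simp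
    next
      case (Suc j)
      have mj: "m0 \<le> L!j" using m0 i len Suc by auto
      show ?thesis unfolding L'_def using i len mi mj Suc by (simp add: of_nat_diff)
    qed
  qed
  show "neglog (p_geo (S ! i) (\<beta> * \<alpha> ^ m0 * \<alpha> ^ (map (\<lambda>x. x - m0) L ! i))) +
          ereal (pen \<gamma> (length S) ((0 # map (\<lambda>x. x - m0) L) ! i) (map (\<lambda>x. x - m0) L ! i))
        \<le> neglog (p_geo (S ! i) (\<beta> * \<alpha> ^ (L ! i))) + ereal (pen \<gamma> (length S) ((0 # L) ! i) (L ! i))"
  proof -
    have e: "neglog (p_geo (S!i) (\<beta> * \<alpha>^m0 * \<alpha>^(L'!i))) = neglog (p_geo (S!i) (\<beta> * \<alpha>^(L!i)))"
      by (simp only: lam)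
    show ?thesis unfolding e[unfolded L'_def] using pn[unfolded L'_def] by (intro add_left_mono) simp
  qed
qed

lemma zero_score:
  fixes L :: "nat list" and \<alpha> \<beta> :: real
  assumes z: "\<forall>i<length S. S!i = 0 \<or> L!i = 0" and a: "0 \<le> \<alpha>" "\<alpha> \<le> 1" and b: "0 \<le> \<beta>" "\<beta> \<le> 1"
  shows "score_geo L S 0 \<beta> \<gamma> \<le> score_geo L S \<alpha> \<beta> \<gamma>"
  unfolding score_geo_def
proof (rule sum_mono)
  fix i assume "i \<in> {..<length S}"
  hence i: "i < length S" by simp
  have "neglog (p_geo (S ! i) (\<beta> * 0 ^ (L ! i))) \<le> neglog (p_geo (S ! i) (\<beta> * \<alpha> ^ (L ! i)))"
  proof (cases "L!i = 0")
    case True then show ?thesis by simp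
  next
    case False
    hence s: "S!i = 0" using z i by auto
    have "0 \<le> \<beta> * \<alpha> ^ (L ! i)" "\<beta> * \<alpha> ^ (L ! i) \<le> 1" using a b by (simp_all add: mult_le_one power_le_one)
    hence "0 \<le> neglog (p_geo (S ! i) (\<beta> * \<alpha> ^ (L ! i)))" by (intro neglog_nonneg p_geo_le1)
    moreover have "neglog (p_geo (S ! i) (\<beta> * 0 ^ (L ! i))) = 0" using False s
      by (simp add: p_geo_def neglog_def zero_power)
    ultimately show ?thesis by simp
  qed
  thus "neglog (p_geo (S ! i) (\<beta> * 0 ^ (L ! i))) + ereal (pen \<gamma> (length S) ((0 # L) ! i) (L ! i))
        \<le> neglog (p_geo (S ! i) (\<beta> * \<alpha> ^ (L ! i))) + ereal (pen \<gamma> (length S) ((0 # L) ! i) (L ! i))"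
    by (intro add_mono) auto
qed



lemma sum_split_pen:
  "(\<Sum>i<n. f i + g i) = (\<Sum>i<n. f i) + (\<Sum>i<n. (g i::real))"
  by (rule sum.distrib)

lemma mean_eq: "mean S = (\<Sum>i<length S. real (S!i)) / real (length S)"
  by (simp add: mean_def)

theorem proposition4:
  fixes S :: "nat list" and \<gamma> \<epsilon> :: real and k :: nat
    and Lopt L :: "nat list" and \<alpha>opt \<beta>opt \<alpha> \<beta> :: real
  assumes "\<gamma> > 0" and "k > 0" and "\<epsilon> > 0"
    and "geo_optimal S \<gamma> k Lopt \<alpha>opt \<beta>opt"
    and "approx_geo_output S \<gamma> k \<epsilon> L \<alpha> \<beta>"
  shows "score_geo L S \<alpha> \<beta> \<gamma> \<le> ereal (1 + \<epsilon>) * score_geo Lopt S \<alpha>opt \<beta>opt \<gamma>"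
proof -
  note g = assms(1) and kp = assms(2) and e = assms(3)
  define n where "n = length S"
  define OPT where "OPT = score_geo Lopt S \<alpha>opt \<beta>opt \<gamma>"
  define m where "m = (\<Sum>i<n. real (S!i))"
  have outin: "(L, \<alpha>, \<beta>) \<in> approx_geo_obs S \<gamma> k \<epsilon>"
    and outmin: "\<And>L' \<alpha>' \<beta>'. (L', \<alpha>', \<beta>') \<in> approx_geo_obs S \<gamma> k \<epsilon> \<Longrightarrow>
        score_geo L S \<alpha> \<beta> \<gamma> \<le> score_geo L' S \<alpha>' \<beta>' \<gamma>"
    using assms(5) unfolding approx_geo_output_def by auto
  have feas: "valid_levels k n Lopt" "0 \<le> \<alpha>opt" "\<alpha>opt < 1" "0 < \<beta>opt" "\<beta>opt < 1"
    and optimal: "\<And>L' \<alpha>' \<beta>'. geo_feasible S k L' \<alpha>' \<beta>' \<Longrightarrow> OPT \<le> score_geo L' S \<alpha>' \<beta>' \<gamma>"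
    using assms(4) unfolding geo_optimal_def geo_feasible_def n_def OPT_def by auto
  show ?thesis
  proof (cases "n = 0")
    case True
    then show ?thesis unfolding n_def by (simp add: score_geo_def)
  next
    case False
    hence n1: "n \<ge> 1" by simp
    have m0: "m \<ge> 0" unfolding m_def by (simp add: sum_nonneg)
    have meanm: "mean S = m / real n" unfolding mean_def m_def n_def ..
    show ?thesis
    proof (cases "m = 0")
      case True
      have S0: "S!i = 0" if "i < n" for i
      proof -
        have "\<forall>i\<in>{..<n}. real (S!i) = 0" using True unfolding m_def
          by (subst sum_nonneg_eq_0_iff[symmetric]) auto
        thus ?thesis using that by simp
      qed
      have mean0: "mean S = 0" using meanm True by simp
      have noal: "approx_alphas S k \<epsilon> = {}"
      proof -
        have "\<not> ((1 / (1 + real n * real k)) powr c \<le> 0 powr (\<epsilon> / real k))" for c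
        proof -
          have "0 < 1 / (1 + real n * real k)" by (simp add: add_pos_nonneg)
          thus ?thesis by simp
        qed
        thus ?thesis unfolding approx_alphas_def Let_def mean0 n_def by auto
      qed
      have obs: "approx_geo_obs S \<gamma> k \<epsilon> = {(replicate n 0, 0, b) | b. 0 < b \<and> b < 1}"
        unfolding approx_geo_obs_def noal geo_alpha_obs_def using mean0 by (simp add: n_def)
      have sc: "score_geo (replicate n 0) S 0 b \<gamma> = ereal (real n * (- ln (1 - b)))" if b: "0 < b" "b < 1" for b
      proof -
        have c: "cnd S (replicate n 0) 0" unfolding cnd_def n_def by simp
        have "score_geo (replicate n 0) S 0 b \<gamma> =
            ereal (\<Sum>i<n. cst (S!i) b (0^((replicate n 0)!i)) + pen \<gamma> n ((0#replicate n 0)!i) ((replicate n 0)!i))"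
          using score_real[OF b _ _ c] unfolding n_def by simp
        also have "(\<Sum>i<n. cst (S!i) b (0^((replicate n 0)!i)) + pen \<gamma> n ((0#replicate n 0)!i) ((replicate n 0)!i))
                 = (\<Sum>i<n. - ln (1 - b))"
        proof (rule sum.cong)
          fix i assume "i \<in> {..<n}"
          hence i: "i < n" by simp
          have "(0#replicate n (0::nat))!i = 0" using i by (cases i) auto
          thus "cst (S!i) b (0^((replicate n 0)!i)) + pen \<gamma> n ((0#replicate n 0)!i) ((replicate n 0)!i) = - ln (1 - b)"
            using i S0[OF i] by (simp add: cst_def pen_def)
        qed simp
        finally show ?thesis by simp
      qed
      obtain b where Lb: "L = replicate n 0" "\<alpha> = 0" "\<beta> = b" "0 < b" "b < 1" using outin obs by auto
      have h2: "0 < b/2" "b/2 < 1" using Lb by simp_all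
      have "(replicate n 0, 0, b/2) \<in> approx_geo_obs S \<gamma> k \<epsilon>" unfolding obs using h2 by blast
      from outmin[OF this] have "ereal (real n * (- ln (1 - b))) \<le> ereal (real n * (- ln (1 - b/2)))"
        using sc[of b] sc[of "b/2"] Lb by simp
      hence "- ln (1 - b) \<le> - ln (1 - b/2)" using n1 by simp
      moreover have "ln (1 - b) < ln (1 - b/2)" using Lb by simp
      ultimately show ?thesis by simp
    next
      case False
      hence mp: "m > 0" using m0 by simp
      show ?thesis
      proof (cases "OPT = \<infinity>")
        case True
        thus ?thesis unfolding OPT_def[symmetric] using e by simp
      next
        case False
        hence OPTf: "OPT \<noteq> \<infinity>" .
        have nr: "real n \<ge> 1" using n1 by simp
        define \<eta>b where "\<eta>b = m / (m + real n)"
        define \<sigma> where "\<sigma> = m / (m + 1)"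
        define \<eta>a where "\<eta>a = 1 / (1 + real n * real k)"
        have \<eta>b_eq: "mean S / (mean S + 1) = \<eta>b" unfolding meanm \<eta>b_def using nr mp by (simp add: field_simps)
        have \<sigma>_eq: "mean S / (mean S + 1 / real n) = \<sigma>" unfolding meanm \<sigma>_def using nr mp by (simp add: field_simps)
        have \<eta>b_pos: "0 < \<eta>b" unfolding \<eta>b_def using mp nr by simp
        have \<eta>b_le: "\<eta>b \<le> \<sigma>" unfolding \<eta>b_def \<sigma>_def using mp nr by (intro divide_left_mono) auto
        have \<sigma>_pos: "0 < \<sigma>" "\<sigma> < 1" unfolding \<sigma>_def using mp by auto
        have k1: "real k \<ge> 1" using kp by simp
        have nk: "real n * real k \<ge> 1" using mult_mono[OF nr k1] by simp
        have \<eta>a_pos: "0 < \<eta>a" "\<eta>a < 1" unfolding \<eta>a_def using nk by simp_all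
        have mS: "m = (\<Sum>i<length S. real (S!i))" unfolding m_def n_def ..
        have fin_le: "X \<noteq> \<infinity>" if "X \<le> OPT" for X using that OPTf by auto
        obtain L1 b1 where L1: "valid_levels k n L1" "0 < b1" "b1 < 1" "\<exists>i0<n. L1!i0 = 0"
          "score_geo L1 S \<alpha>opt b1 \<gamma> \<le> OPT"
        proof (cases "\<alpha>opt = 0")
          case True
          have c: "cnd S Lopt \<alpha>opt" using OPTf feas unfolding OPT_def by (intro fin_cnd) auto
          have "\<exists>i0<n. Lopt!i0 = 0"
          proof (rule ccontr)
            assume "\<not> (\<exists>i0<n. Lopt!i0 = 0)"
            hence "S!i = 0" if "i < n" for i using c that True unfolding cnd_def n_def by auto
            hence "m = 0" unfolding m_def by simp
            thus False using mp by simp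
          qed
          thus ?thesis using that[of Lopt \<beta>opt] feas unfolding OPT_def by simp
        next
          case False
          hence ap: "\<alpha>opt > 0" using feas by simp
          define m0 where "m0 = Min (set Lopt)"
          have len: "length Lopt = n" using feas unfolding valid_levels_def by simp
          have ne: "set Lopt \<noteq> {}" using len n1 by auto
          have m0in: "m0 \<in> set Lopt" unfolding m0_def using ne by simp
          have m0le: "\<forall>x\<in>set Lopt. m0 \<le> x" unfolding m0_def by simp
          obtain i0 where i0: "i0 < n" "Lopt!i0 = m0" using m0in len by (auto simp: in_set_conv_nth)
          define L1 where "L1 = map (\<lambda>x. x - m0) Lopt"
          define b1 where "b1 = \<beta>opt * \<alpha>opt^m0"
          have v: "valid_levels k n L1" using feas unfolding L1_def valid_levels_def by auto
          have b1p: "0 < b1" unfolding b1_def using feas ap by simp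
          have "b1 \<le> \<beta>opt" unfolding b1_def using feas ap by (simp add: mult_left_le power_le_one)
          hence b1l: "b1 < 1" using feas by simp
          have z: "\<exists>i0<n. L1!i0 = 0" using i0 len unfolding L1_def by auto
          have "score_geo L1 S \<alpha>opt b1 \<gamma> \<le> OPT" unfolding L1_def b1_def OPT_def
            using shift_score[OF g _ m0le] len n_def by simp
          thus ?thesis using that v b1p b1l z by blast
        qed
        have fin1: "score_geo L1 S \<alpha>opt b1 \<gamma> \<noteq> \<infinity>" using fin_le L1(5) .
        define a2 where "a2 = (if \<alpha>opt = 0 \<or> (\<forall>i<n. S!i = 0 \<or> L1!i = 0) then 0 else max \<alpha>opt \<eta>a)"
        have a2r: "0 \<le> a2" "a2 < 1" "a2 = 0 \<or> \<eta>a \<le> a2" using feas \<eta>a_pos by (auto simp: a2_def)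
        have a2s: "score_geo L1 S a2 b1 \<gamma> \<le> score_geo L1 S \<alpha>opt b1 \<gamma>"
        proof (cases "\<alpha>opt = 0 \<or> (\<forall>i<n. S!i = 0 \<or> L1!i = 0)")
          case True
          hence a20: "a2 = 0" by (simp add: a2_def)
          show ?thesis
          proof (cases "\<alpha>opt = 0")
            case True then show ?thesis using a20 by simp
          next
            case False
            hence "\<forall>i<length S. S!i = 0 \<or> L1!i = 0" using \<open>\<alpha>opt = 0 \<or> _\<close> n_def by auto
            then show ?thesis unfolding a20 using feas L1 by (intro zero_score) auto
          qed
        next
          case False
          hence ap: "\<alpha>opt > 0" and jj: "\<exists>j<n. S!j \<noteq> 0 \<and> L1!j \<noteq> 0" using feas by auto
          show ?thesis
          proof (cases "\<eta>a \<le> \<alpha>opt")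
            case True
            hence "a2 = \<alpha>opt" using False unfolding a2_def by (auto simp del: not_gr0)
            thus ?thesis by simp
          next
            case nle: False
            hence a2e: "a2 = \<eta>a" using False unfolding a2_def by (auto simp del: not_gr0)
            obtain j where j: "j < n" "S!j > 0" "L1!j > 0" using jj by auto
            have c1: "cnd S L1 \<eta>a" unfolding cnd_def using \<eta>a_pos by simp
            have c2: "cnd S L1 \<alpha>opt" unfolding cnd_def using ap by simp
            have r: "(\<Sum>i<n. cst (S!i) b1 (\<eta>a^(L1!i))) \<le> (\<Sum>i<n. cst (S!i) b1 (\<alpha>opt^(L1!i)))"
              using raise_alpha[where n=n and k=k and \<alpha>=\<alpha>opt and \<beta>=b1 and j=j and s="\<lambda>i. S!i" and l="\<lambda>i. L1!i"]
                n1 kp ap nle L1 j unfolding \<eta>a_def by simp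
            show ?thesis unfolding a2e
              using score_real[OF L1(2,3) _ _ c1, of \<gamma>] score_real[OF L1(2,3) _ _ c2, of \<gamma>] r \<eta>a_pos feas
              by (simp add: sum.distrib n_def)
          qed
        qed
        have fin2: "score_geo L1 S a2 b1 \<gamma> \<noteq> \<infinity>" using fin_le a2s L1(5) order_trans by blast
        have c3: "cnd S L1 a2" using fin_cnd[OF fin2] a2r by simp
        have ai: "0 \<le> a2^(L1!i) \<and> a2^(L1!i) \<le> 1" for i using a2r by (simp add: power_le_one)
        define A where "A b = (\<Sum>i<n. cst (S!i) b (a2^(L1!i)))" for b
        define P where "P = (\<Sum>i<n. pen \<gamma> n ((0#L1)!i) (L1!i))"
        have sr: "score_geo L1 S a2 b \<gamma> = ereal (A b + P)" if "0<b" "b<1" for b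
          using score_real[OF that _ _ c3, of \<gamma>] a2r unfolding A_def P_def n_def by (simp add: sum.distrib)
        obtain b3 where b3: "\<eta>b \<le> b3" "b3 \<le> \<sigma>" "A b3 \<le> A b1"
        proof -
          consider "b1 > \<sigma>" | "b1 < \<eta>b" | "\<eta>b \<le> b1 \<and> b1 \<le> \<sigma>" by linarith
          thus ?thesis
          proof cases
            case 1
            obtain i0 where i0: "i0 < n" "L1!i0 = 0" using L1(4) by auto
            have "m * (1 - \<sigma>) \<le> \<sigma>" unfolding \<sigma>_def using mp by (simp add: field_simps)
            hence "A \<sigma> \<le> A b1" unfolding A_def
              using beta_up[where n=n and s="\<lambda>i. S!i" and a="\<lambda>i. a2^(L1!i)" and x=\<sigma> and y=b1 and iz=i0]
                ai i0 \<sigma>_pos 1 L1 unfolding m_def by simp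
            thus ?thesis using that[of \<sigma>] \<eta>b_le by simp
          next
            case 2
            have "real n * \<eta>b \<le> m * (1 - \<eta>b)" unfolding \<eta>b_def using mp nr by (simp add: field_simps)
            hence "A \<eta>b \<le> A b1" unfolding A_def
              using beta_down[where n=n and s="\<lambda>i. S!i" and a="\<lambda>i. a2^(L1!i)" and x=b1 and y=\<eta>b]
                ai \<sigma>_pos 2 L1 \<eta>b_le unfolding m_def by simp
            thus ?thesis using that[of \<eta>b] \<eta>b_le by simp
          next
            case 3 thus ?thesis using that[of b1] by simp
          qed
        qed
        have b3r: "0 < b3" "b3 < 1" using b3 \<eta>b_pos \<sigma>_pos by linarith+
        have X: "score_geo L1 S a2 b3 \<gamma> \<le> OPT"
        proof -
          have "score_geo L1 S a2 b3 \<gamma> \<le> score_geo L1 S a2 b1 \<gamma>" using sr[OF b3r] sr[OF L1(2,3)] b3 by simp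
          thus ?thesis using a2s L1(5) by (meson order_trans)
        qed
        have Xr: "score_geo L1 S a2 b3 \<gamma> = ereal (A b3 + P)" using sr[OF b3r] .
        have pen0: "pen \<gamma> n x y \<ge> 0" for x y using pen_nonneg[OF g n1] .
        have P0: "P \<ge> 0" unfolding P_def using pen0 by (simp add: sum_nonneg)
        have meannz: "mean S \<noteq> 0" using meanm mp nr by simp
        have lenS: "length S = n" unfolding n_def ..
        have gab: "geo_alpha_betas S \<epsilon> = {\<eta>b powr cval \<epsilon> j | j. \<forall>i\<le>j. \<eta>b powr cval \<epsilon> i \<le> \<sigma>}"
          unfolding geo_alpha_betas_def Let_def \<eta>b_eq lenS \<sigma>_eq ..
        have gao: "geo_alpha_obs S a \<gamma> k \<epsilon> = {(L, a, \<beta>) | L \<beta>. \<beta> \<in> geo_alpha_betas S \<epsilon> \<and> viterbi_out S a \<beta> \<gamma> k L}" for a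
          unfolding geo_alpha_obs_def using meannz by simp
        have aal: "approx_alphas S k \<epsilon> = {\<eta>a powr cval \<epsilon> j | j. \<forall>i\<le>j. \<eta>a powr cval \<epsilon> i \<le> \<sigma> powr (\<epsilon> / real k)}"
          unfolding approx_alphas_def Let_def lenS \<sigma>_eq \<eta>a_def ..
        have L1v: "valid_levels k (length S) L1" using L1(1) lenS by simp
        have key: "\<exists>L' \<alpha>' \<beta>'. (L', \<alpha>', \<beta>') \<in> approx_geo_obs S \<gamma> k \<epsilon> \<and>
                     score_geo L' S \<alpha>' \<beta>' \<gamma> \<le> ereal ((1+\<epsilon>) * (A b3 + P))"
        proof (cases "a2 > \<sigma> powr (\<epsilon> / real k)")
          case True
          define \<tau> where "\<tau> = \<sigma> powr \<epsilon>"
          have \<tau>r: "0 < \<tau>" "\<tau> \<le> 1" unfolding \<tau>_def using \<sigma>_pos e by (simp_all add: powr_le1)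
          have a2p: "a2 > 0" using True \<sigma>_pos by (meson le_less_trans powr_ge_zero)
          have kpow: "(\<sigma> powr (\<epsilon> / real k))^k = \<tau>"
          proof -
            have "(\<sigma> powr (\<epsilon> / real k))^k = (\<sigma> powr (\<epsilon> / real k)) powr (real k)"
              using \<sigma>_pos by (simp add: powr_realpow)
            also have "\<dots> = \<tau>" unfolding \<tau>_def powr_powr using k1 by simp
            finally show ?thesis .
          qed
          have aiT: "\<tau> \<le> a2^(L1!i)" if "i < n" for i
          proof -
            have "L1!i \<le> k" using L1(1) that unfolding valid_levels_def by auto
            hence "a2^k \<le> a2^(L1!i)" using a2r by (intro power_decreasing) auto
            moreover have "(\<sigma> powr (\<epsilon> / real k))^k \<le> a2^k" using True by (intro power_mono) auto
            ultimately show ?thesis using kpow by simp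
          qed
          define t where "t = b3 * \<tau>"
          have tr0: "0 < t" "t \<le> b3" unfolding t_def using b3r \<tau>r by (simp_all add: mult_left_le)
          have tr: "0 < t" "t \<le> b3" "t < 1" using tr0 b3r by linarith+
          obtain Lv where Lv: "viterbi_out S 0 \<eta>b \<gamma> k Lv" using viterbi_ex by blast
          have \<eta>bin: "\<eta>b \<in> geo_alpha_betas S \<epsilon>"
          proof -
            have "\<eta>b = \<eta>b powr cval \<epsilon> 0 \<and> (\<forall>i\<le>0. \<eta>b powr cval \<epsilon> i \<le> \<sigma>)"
              using \<eta>b_pos \<eta>b_le by (simp add: cval_def)
            thus ?thesis unfolding gab by blast
          qed
          have inobs: "(Lv, 0, \<eta>b) \<in> approx_geo_obs S \<gamma> k \<epsilon>"
            unfolding approx_geo_obs_def gao using \<eta>bin Lv by auto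
          have rv: "valid_levels k (length S) (replicate n 0)" unfolding valid_levels_def lenS by simp
          have cr: "cnd S (replicate n 0) 0" unfolding cnd_def lenS by simp
          have \<eta>b1: "\<eta>b < 1" using \<eta>b_le \<sigma>_pos by linarith
          have "score_geo Lv S 0 \<eta>b \<gamma> \<le> score_geo (replicate n 0) S 0 \<eta>b \<gamma>" using Lv rv unfolding viterbi_out_def by blast
          also have "\<dots> = ereal (\<Sum>i<n. cst (S!i) \<eta>b (0^((replicate n 0)!i)) + pen \<gamma> n ((0#replicate n 0)!i) ((replicate n 0)!i))"
            using score_real[OF \<eta>b_pos \<eta>b1 _ _ cr] lenS by simp
          also have "(\<Sum>i<n. cst (S!i) \<eta>b (0^((replicate n 0)!i)) + pen \<gamma> n ((0#replicate n 0)!i) ((replicate n 0)!i))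
                   = (\<Sum>i<n. - ln (1 - \<eta>b) - real (S!i) * ln \<eta>b)"
          proof (rule sum.cong)
            fix i assume "i \<in> {..<n}"
            hence i: "i < n" by simp
            have "(0#replicate n (0::nat))!i = 0" using i by (cases i) auto
            thus "cst (S!i) \<eta>b (0^((replicate n 0)!i)) + pen \<gamma> n ((0#replicate n 0)!i) ((replicate n 0)!i)
                = - ln (1 - \<eta>b) - real (S!i) * ln \<eta>b"
              using i by (simp add: cst_def pen_def)
          qed simp
          also have "\<dots> = real n * (- ln (1 - \<eta>b)) - m * ln \<eta>b"
            unfolding m_def by (simp add: sum_subtractf sum_distrib_right)
          finally have s1: "score_geo Lv S 0 \<eta>b \<gamma> \<le> ereal (real n * (- ln (1 - \<eta>b)) - m * ln \<eta>b)" .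
          define Aa where "Aa = real n * (- ln (1 - t)) - m * ln b3"
          have em: "real n * (- ln (1 - \<eta>b)) - m * ln \<eta>b \<le> real n * (- ln (1 - t)) - m * ln t"
            unfolding \<eta>b_def using eta_min[of "real n" m t] nr mp tr by simp
          have lnt: "ln t = ln b3 + \<epsilon> * ln \<sigma>" unfolding t_def \<tau>_def using b3r \<sigma>_pos by (simp add: ln_mult)
          have lb: "ln b3 \<le> ln \<sigma>" using b3 b3r by simp
          have lb0: "ln b3 < 0" using b3r by simp
          have lt0: "- ln (1 - t) \<ge> 0" using tr by simp
          have "- m * (\<epsilon> * ln \<sigma>) \<le> \<epsilon> * (- m * ln b3)" using lb mp e
            by (simp add: algebra_simps mult_left_mono)
          moreover have "0 \<le> - m * ln b3" using mp lb0 by (simp add: mult_pos_neg less_imp_le)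
          moreover have "- m * ln t = - m * ln b3 + (- m * (\<epsilon> * ln \<sigma>))" using lnt by (simp add: algebra_simps)
          moreover have "0 \<le> real n * (- ln (1 - t))" using lt0 by (intro mult_nonneg_nonneg) auto
          moreover have "\<epsilon> * (- m * ln b3) \<le> \<epsilon> * Aa"
            using \<open>0 \<le> real n * (- ln (1 - t))\<close> e unfolding Aa_def by (intro mult_left_mono) auto
          ultimately have s2: "real n * (- ln (1 - \<eta>b)) - m * ln \<eta>b \<le> (1+\<epsilon>) * Aa"
            using em unfolding Aa_def by (simp add: algebra_simps)
          have "Aa = (\<Sum>i<n. - ln (1 - t) - real (S!i) * ln b3)"
            unfolding Aa_def m_def by (simp add: sum_subtractf sum_distrib_right)
          also have "\<dots> \<le> (\<Sum>i<n. cst (S!i) b3 (a2^(L1!i)) + pen \<gamma> n ((0#L1)!i) (L1!i))"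
          proof (rule sum_mono)
            fix i assume "i \<in> {..<n}"
            hence i: "i < n" by simp
            have ai1: "a2^(L1!i) \<le> 1" "0 < a2^(L1!i)" using ai a2p by simp_all
            have "t \<le> b3 * a2^(L1!i)" unfolding t_def using aiT[OF i] b3r by simp
            moreover have "b3 * a2^(L1!i) < 1" using ai1 b3r by (smt (verit) mult_left_le)
            ultimately have "- ln (1 - t) \<le> - ln (1 - b3 * a2^(L1!i))" by simp
            moreover have "0 \<le> - real (S!i) * ln (a2^(L1!i))" using ai1 by (simp add: mult_nonneg_nonpos)
            ultimately show "- ln (1 - t) - real (S!i) * ln b3 \<le> cst (S!i) b3 (a2^(L1!i)) + pen \<gamma> n ((0#L1)!i) (L1!i)"
              unfolding cst_def using pen0[of "(0#L1)!i" "L1!i"] by linarith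
          qed
          also have "\<dots> = A b3 + P" unfolding A_def P_def by (simp add: sum.distrib)
          finally have "Aa \<le> A b3 + P" .
          hence "(1+\<epsilon>) * Aa \<le> (1+\<epsilon>) * (A b3 + P)" using e by simp
          hence "score_geo Lv S 0 \<eta>b \<gamma> \<le> ereal ((1+\<epsilon>) * (A b3 + P))" using s1 s2 by (simp add: order_trans)
          thus ?thesis using inobs by blast
        next
          case False
          hence a2U: "a2 \<le> \<sigma> powr (\<epsilon> / real k)" by simp
          have U1: "\<sigma> powr (\<epsilon> / real k) < 1"
          proof -
            have "ln \<sigma> < 0" using \<sigma>_pos by simp
            hence "\<epsilon> * ln \<sigma> < 0" using e by (simp add: mult_pos_neg)
            hence "\<epsilon> * ln \<sigma> / real k < 0" using k1 by (simp add: divide_neg_pos)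
            moreover have "\<sigma> powr (\<epsilon> / real k) = exp (\<epsilon> * ln \<sigma> / real k)" using \<sigma>_pos by (simp add: powr_def)
            ultimately show ?thesis by simp
          qed
          obtain jb where jb: "\<forall>i\<le>jb. \<eta>b powr cval \<epsilon> i \<le> \<sigma>" "0 < \<eta>b powr cval \<epsilon> jb"
            "\<eta>b powr cval \<epsilon> jb \<le> b3" "- ln (\<eta>b powr cval \<epsilon> jb) \<le> (1+\<epsilon>) * (- ln b3)"
            using grid[OF \<eta>b_pos b3(1,2) \<sigma>_pos(2) e] by blast
          define \<beta>t where "\<beta>t = \<eta>b powr cval \<epsilon> jb"
          have \<beta>tin: "\<beta>t \<in> geo_alpha_betas S \<epsilon>" unfolding gab \<beta>t_def using jb by blast
          have \<beta>tr: "0 < \<beta>t" "\<beta>t \<le> b3" "- ln \<beta>t \<le> (1+\<epsilon>) * (- ln b3)" using jb unfolding \<beta>t_def by auto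
          obtain \<alpha>t where at: "0 \<le> \<alpha>t" "\<alpha>t \<le> a2" "a2 = 0 \<Longrightarrow> \<alpha>t = 0"
              "a2 > 0 \<Longrightarrow> \<alpha>t > 0 \<and> - ln \<alpha>t \<le> (1+\<epsilon>) * (- ln a2)"
              "\<alpha>t = 0 \<or> \<alpha>t \<in> approx_alphas S k \<epsilon>"
          proof (cases "a2 = 0")
            case True
            thus ?thesis using that[of 0] by simp
          next
            case False
            hence "\<eta>a \<le> a2" using a2r by simp
            then obtain ja where ja: "\<forall>i\<le>ja. \<eta>a powr cval \<epsilon> i \<le> \<sigma> powr (\<epsilon> / real k)" "0 < \<eta>a powr cval \<epsilon> ja"
              "\<eta>a powr cval \<epsilon> ja \<le> a2" "- ln (\<eta>a powr cval \<epsilon> ja) \<le> (1+\<epsilon>) * (- ln a2)"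
              using grid[OF \<eta>a_pos(1) _ a2U U1 e] by blast
            have "\<eta>a powr cval \<epsilon> ja \<in> approx_alphas S k \<epsilon>" unfolding aal using ja by blast
            thus ?thesis using that[of "\<eta>a powr cval \<epsilon> ja"] ja False by simp
          qed
          have atz: "\<alpha>t = 0 \<longleftrightarrow> a2 = 0" using at a2r by (cases "a2 = 0") auto
          obtain Lv where Lv: "viterbi_out S \<alpha>t \<beta>t \<gamma> k Lv" using viterbi_ex by blast
          have inobs: "(Lv, \<alpha>t, \<beta>t) \<in> approx_geo_obs S \<gamma> k \<epsilon>"
          proof (cases "\<alpha>t = 0")
            case True
            have "(Lv, \<alpha>t, \<beta>t) \<in> geo_alpha_obs S 0 \<gamma> k \<epsilon>" unfolding gao using True \<beta>tin Lv by auto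
            thus ?thesis unfolding approx_geo_obs_def by simp
          next
            case False
            hence "\<alpha>t \<in> approx_alphas S k \<epsilon>" using at by simp
            moreover have "(Lv, \<alpha>t, \<beta>t) \<in> geo_alpha_obs S \<alpha>t \<gamma> k \<epsilon>" unfolding gao using \<beta>tin Lv by auto
            ultimately show ?thesis unfolding approx_geo_obs_def by blast
          qed
          have ct: "cnd S L1 \<alpha>t" using c3 atz unfolding cnd_def by auto
          have \<beta>t1: "\<beta>t < 1" using \<beta>tr b3r by linarith
          have at1: "\<alpha>t \<le> 1" using at a2r by linarith
          have "score_geo Lv S \<alpha>t \<beta>t \<gamma> \<le> score_geo L1 S \<alpha>t \<beta>t \<gamma>" using Lv L1v unfolding viterbi_out_def by blast
          also have "\<dots> = ereal (\<Sum>i<n. cst (S!i) \<beta>t (\<alpha>t^(L1!i)) + pen \<gamma> n ((0#L1)!i) (L1!i))"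
            using score_real[OF \<beta>tr(1) \<beta>t1 at(1) at1 ct] lenS by simp
          also have "\<dots> \<le> ereal (\<Sum>i<n. (1+\<epsilon>) * (cst (S!i) b3 (a2^(L1!i)) + pen \<gamma> n ((0#L1)!i) (L1!i)))"
          proof -
            have "cst (S!i) \<beta>t (\<alpha>t^(L1!i)) + pen \<gamma> n ((0#L1)!i) (L1!i)
                  \<le> (1+\<epsilon>) * (cst (S!i) b3 (a2^(L1!i)) + pen \<gamma> n ((0#L1)!i) (L1!i))" for i
              using final_term[OF \<beta>tr(1,2) b3r(2) \<beta>tr(3) at(1,2) a2r(2) at(3,4) e pen0] by blast
            thus ?thesis by (simp add: sum_mono)
          qed
          also have "\<dots> = ereal ((1+\<epsilon>) * (A b3 + P))"
            unfolding A_def P_def by (simp add: sum_distrib_left[symmetric] sum.distrib)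
          finally show ?thesis using inobs by blast
        qed
        then obtain L' \<alpha>' \<beta>' where o: "(L', \<alpha>', \<beta>') \<in> approx_geo_obs S \<gamma> k \<epsilon>"
          "score_geo L' S \<alpha>' \<beta>' \<gamma> \<le> ereal ((1+\<epsilon>) * (A b3 + P))" by blast
        have "score_geo L S \<alpha> \<beta> \<gamma> \<le> ereal ((1+\<epsilon>) * (A b3 + P))" using outmin[OF o(1)] o(2) by simp
        also have "\<dots> = ereal (1+\<epsilon>) * score_geo L1 S a2 b3 \<gamma>" unfolding Xr by simp
        also have "\<dots> \<le> ereal (1+\<epsilon>) * OPT" using X e by (intro ereal_mult_left_mono) auto
        finally show ?thesis unfolding OPT_def .
      qed
    qed
  qed
qed


end
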